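(* Let $I \subseteq A = \mathbbm{k}[X_1,\dots,X_r]$ be a monomial ideal and let $\mathbf{a} \in \mathbb{N}^r$. Let $p, q \in \mathbb{N}$ with $q \neq 0$. Then $x^{\mathbf{a}} \in I_{p/q}$ if and only if $\nu^*_{\mathbf{a}}(I) \ge \frac{p}{q}$.
   Context: $\mathbbm{k}$ is a field. For an ideal $I$ in a domain $A$ and a positive rational $u = p/q$ ($p,q\in\mathbb{N}$, $q\neq 0$), the $u$-th rational power is $I_u = \{x \in A : x^q \in \overline{I^p}\}$, where $\overline{\,\cdot\,}$ denotes integral closure; this does not depend on the representation of $u$. For a monomial ideal $I$ with minimal monomial generators whose exponent vectors form the columns of the $r\times m$ matrix $M$ (the exponent matrix of $I$), and $\mathbf{a}\in\mathbb{N}^r$, $\nu^*_{\mathbf{a}}(I)$ denotes the optimal value of the linear program: maximize $\mathbf{1}^m\cdot \mathbf{y}$ subject to $M\mathbf{y} \le \mathbf{a}$, $\mathbf{y}\in\mathbb{R}^m_{\ge 0}$ (equivalently, by LP duality, the minimum of $\mathbf{a}\cdot\mathbf{z}$ subject to $M^T\mathbf{z}\ge \mathbf{1}^m$, $\mathbf{z}\in\mathbb{R}^r_{\ge0}$). $x^{\mathbf a}$ denotes the monomial with exponent vector $\mathbf a$. *)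

theory Defs
  imports "HOL-Library.Poly_Mapping" "HOL-Library.Extended_Real" Complex_Main
begin

text \<open>Polynomial ring over index type n (finite, r = CARD n) is
  the poly_mapping type from monomial exponent vectors to coefficients.\<close>

definition is_ideal :: "'r::comm_ring_1 set \<Rightarrow> bool" where
  "is_ideal I \<longleftrightarrow> 0 \<in> I \<and> (\<forall>x\<in>I. \<forall>y\<in>I. x + y \<in> I) \<and> (\<forall>a x. x \<in> I \<longrightarrow> a * x \<in> I)"

definition ideal_gen :: "'r::comm_ring_1 set \<Rightarrow> 'r set" where
  "ideal_gen S = \<Inter>{J. is_ideal J \<and> S \<subseteq> J}"

fun ideal_pow :: "'r::comm_ring_1 set \<Rightarrow> nat \<Rightarrow> 'r set" where
  "ideal_pow I 0 = UNIV"
| "ideal_pow I (Suc n) = ideal_gen {x * y | x y. x \<in> I \<and> y \<in> ideal_pow I n}"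

definition int_closure :: "'r::comm_ring_1 set \<Rightarrow> 'r set" where
  "int_closure J = {x. \<exists>n\<ge>1. \<exists>c::nat \<Rightarrow> 'r. (\<forall>i\<in>{1..n}. c i \<in> ideal_pow J i) \<and>
                        x ^ n + (\<Sum>i=1..n. c i * x ^ (n - i)) = 0}"

definition rat_power :: "'r::comm_ring_1 set \<Rightarrow> nat \<Rightarrow> nat \<Rightarrow> 'r set" where
  "rat_power I p q = {x. x ^ q \<in> int_closure (ideal_pow I p)}"

definition monom_x :: "('n \<Rightarrow>\<^sub>0 nat) \<Rightarrow> (('n \<Rightarrow>\<^sub>0 nat) \<Rightarrow>\<^sub>0 'k::comm_ring_1)" where
  "monom_x a = Poly_Mapping.single a 1"

definition monomial_ideal :: "(('n \<Rightarrow>\<^sub>0 nat) \<Rightarrow>\<^sub>0 'k::comm_ring_1) set \<Rightarrow> bool" where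
  "monomial_ideal I \<longleftrightarrow> (\<exists>S. I = ideal_gen (monom_x ` S))"

definition min_gens :: "(('n \<Rightarrow>\<^sub>0 nat) \<Rightarrow>\<^sub>0 'k::comm_ring_1) set \<Rightarrow> ('n \<Rightarrow>\<^sub>0 nat) set" where
  "min_gens I = {g. monom_x g \<in> I \<and>
      (\<forall>b. monom_x b \<in> I \<and> (\<forall>i. Poly_Mapping.lookup b i \<le> Poly_Mapping.lookup g i) \<longrightarrow> b = g)}"

definition nu_star :: "('n \<Rightarrow>\<^sub>0 nat) \<Rightarrow> (('n \<Rightarrow>\<^sub>0 nat) \<Rightarrow>\<^sub>0 'k::comm_ring_1) set \<Rightarrow> ereal" where
  "nu_star a I = (SUP y \<in> {y :: ('n \<Rightarrow>\<^sub>0 nat) \<Rightarrow> real.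
        (\<forall>g\<in>min_gens I. y g \<ge> 0) \<and>
        (\<forall>i. (\<Sum>g\<in>min_gens I. real (Poly_Mapping.lookup g i) * y g) \<le> real (Poly_Mapping.lookup a i))}.
      ereal (\<Sum>g\<in>min_gens I. y g))"

end

theory Submission
  imports Defs
begin


type_synonym con = "(nat \<Rightarrow> real) \<times> real"

definition lhs :: "nat \<Rightarrow> (nat \<Rightarrow> real) \<Rightarrow> (nat \<Rightarrow> real) \<Rightarrow> real" where
  "lhs n c x = (\<Sum>j<n. c j * x j)"

definition sat :: "nat \<Rightarrow> (nat \<Rightarrow> real) \<Rightarrow> con \<Rightarrow> bool" where
  "sat n x s \<longleftrightarrow> lhs n (fst s) x \<le> snd s"

definition comb :: "nat \<Rightarrow> con \<Rightarrow> con \<Rightarrow> con" where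
  "comb n s t = (\<lambda>j. fst s j / fst s n - fst t j / fst t n, snd s / fst s n - snd t / fst t n)"

definition proj :: "nat \<Rightarrow> con set \<Rightarrow> con set" where
  "proj n S = {s\<in>S. fst s n = 0} \<union> {comb n s t | s t. s\<in>S \<and> t\<in>S \<and> fst s n > 0 \<and> fst t n < 0}"

definition rat_con :: "con \<Rightarrow> bool" where
  "rat_con s \<longleftrightarrow> (\<forall>j. fst s j \<in> \<rat>) \<and> snd s \<in> \<rat>"

definition icomb :: "con set \<Rightarrow> con set" where
  "icomb S = {((\<lambda>j. \<Sum>s\<in>S. l s * fst s j), (\<Sum>s\<in>S. l s * snd s)) | l. \<forall>s\<in>S. 0 \<le> l s}"

fun fm :: "nat \<Rightarrow> con set \<Rightarrow> con set" where
  "fm 0 S = S"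
| "fm (Suc n) S = fm n (proj n S)"

lemma lhs_upd: "lhs n c (x(n:=v)) = lhs n c x"
  unfolding lhs_def by (intro sum.cong) auto

lemma lhs_Suc: "lhs (Suc n) c x = lhs n c x + c n * x n"
  unfolding lhs_def by simp

lemma finite_proj: "finite S \<Longrightarrow> finite (proj n S)"
proof -
  assume "finite S"
  have "proj n S \<subseteq> S \<union> (\<lambda>(s,t). comb n s t) ` (S \<times> S)"
    unfolding proj_def by auto
  moreover have "finite (S \<union> (\<lambda>(s,t). comb n s t) ` (S \<times> S))" using \<open>finite S\<close> by auto
  ultimately show ?thesis by (rule finite_subset)
qed

lemma lhs_comb: "lhs n (fst (comb n s t)) x = lhs n (fst s) x / fst s n - lhs n (fst t) x / fst t n"
  unfolding lhs_def comb_def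
  by (simp add: sum_subtractf sum_divide_distrib left_diff_distrib)

lemma sat_comb:
  assumes "fst s n > 0" "fst t n < 0"
  shows "sat n x (comb n s t) \<longleftrightarrow>
    (snd t - lhs n (fst t) x) / fst t n \<le> (snd s - lhs n (fst s) x) / fst s n"
  unfolding sat_def lhs_comb using assms
  by (simp add: comb_def diff_divide_distrib) argo

lemma rat_lhs: "(\<forall>j. fst s j \<in> \<rat>) \<Longrightarrow> (\<forall>j<n. x j \<in> \<rat>) \<Longrightarrow> lhs n (fst s) x \<in> \<rat>"
  unfolding lhs_def by (intro Rats_sum) auto

lemma proj_complete:
  assumes fin: "finite S" and sp: "\<forall>s\<in>proj n S. sat n x s"
  shows "\<exists>v. (\<forall>s\<in>S. sat (Suc n) (x(n:=v)) s) \<and>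
     ((\<forall>j<n. x j \<in> \<rat>) \<and> (\<forall>s\<in>S. rat_con s) \<longrightarrow> v \<in> \<rat>)"
proof -
  define N where "N = {t\<in>S. fst t n < 0}"
  define P where "P = {t\<in>S. fst t n > 0}"
  define L where "L t = (snd t - lhs n (fst t) x) / fst t n" for t
  have finN: "finite N" and finP: "finite P" using fin by (auto simp: N_def P_def)
  define v where "v = (if N \<noteq> {} then Max (L ` N) else if P \<noteq> {} then Min (L ` P) else 0)"
  have satv: "sat (Suc n) (x(n:=v)) s \<longleftrightarrow> fst s n * v \<le> snd s - lhs n (fst s) x" for s
    unfolding sat_def lhs_Suc lhs_upd by auto
  have LP: "L t \<le> L s" if "s \<in> P" "t \<in> N" for s t
  proof -
    have "comb n s t \<in> proj n S" using that unfolding proj_def P_def N_def by blast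
    with sp have "sat n x (comb n s t)" by blast
    then show ?thesis using that sat_comb[of s n t x] by (auto simp: P_def N_def L_def)
  qed
  have "\<forall>s\<in>S. sat (Suc n) (x(n:=v)) s"
  proof
    fix s assume sS: "s \<in> S"
    consider "fst s n = 0" | "fst s n > 0" | "fst s n < 0" by linarith
    then show "sat (Suc n) (x(n:=v)) s"
    proof cases
      case 1
      then have "s \<in> proj n S" using sS by (auto simp: proj_def)
      then show ?thesis unfolding satv using sp 1 by (auto simp: sat_def)
    next
      case 2
      have "v \<le> L s"
      proof (cases "N \<noteq> {}")
        case True
        then have "v \<in> L ` N" unfolding v_def using finN by (simp add: Max_in)
        then obtain t where "t \<in> N" "v = L t" by auto
        then show ?thesis using LP[of s t] sS 2 by (auto simp: P_def)
      next
        case False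
        moreover have "P \<noteq> {}" unfolding P_def using sS 2 by blast
        ultimately have "v = Min (L ` P)" by (simp add: v_def)
        then show ?thesis using finP sS 2 by (auto simp: P_def)
      qed
      then show ?thesis using 2 unfolding satv L_def by (simp add: pos_le_divide_eq mult.commute)
    next
      case 3
      then have "s \<in> N" using sS by (auto simp: N_def)
      then have "L s \<le> v" unfolding v_def using finN by auto
      then show ?thesis using 3 unfolding satv L_def by (simp add: neg_divide_le_eq mult.commute)
    qed
  qed
  moreover have "v \<in> \<rat>" if r: "\<forall>j<n. x j \<in> \<rat>" "\<forall>s\<in>S. rat_con s"
  proof -
    have "L t \<in> \<rat>" if "t \<in> S" for t
      using r that rat_lhs[of t n x] unfolding L_def rat_con_def by auto
    moreover have "N \<subseteq> S" "P \<subseteq> S" by (auto simp: N_def P_def)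
    ultimately have sub: "L ` N \<subseteq> \<rat>" "L ` P \<subseteq> \<rat>" by auto
    show ?thesis
    proof (cases "N \<noteq> {}")
      case True
      then have "Max (L ` N) \<in> L ` N" using finN by (intro Max_in) auto
      then show ?thesis using True sub unfolding v_def by auto
    next
      case False
      show ?thesis
      proof (cases "P \<noteq> {}")
        case True
        then have "Min (L ` P) \<in> L ` P" using finP by (intro Min_in) auto
        then show ?thesis using True False sub unfolding v_def by auto
      qed (use False in \<open>auto simp: v_def\<close>)
    qed
  qed
  ultimately show ?thesis by blast
qed

lemma rat_comb: "rat_con s \<Longrightarrow> rat_con t \<Longrightarrow> rat_con (comb n s t)"
  unfolding rat_con_def comb_def by (simp add: Rats_diff Rats_divide)

lemma rat_proj: "\<forall>s\<in>S. rat_con s \<Longrightarrow> \<forall>s\<in>proj n S. rat_con s"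
  unfolding proj_def using rat_comb by blast

lemma fm_complete:
  "finite S \<Longrightarrow> (\<forall>s\<in>fm n S. 0 \<le> snd s) \<Longrightarrow>
   \<exists>x. (\<forall>s\<in>S. sat n x s) \<and> ((\<forall>s\<in>S. rat_con s) \<longrightarrow> (\<forall>j<n. x j \<in> \<rat>))"
proof (induction n arbitrary: S)
  case 0
  then show ?case by (intro exI[of _ "\<lambda>_. 0"]) (auto simp: sat_def lhs_def)
next
  case (Suc n)
  from Suc.IH[of "proj n S"] Suc.prems finite_proj
  obtain x where x: "\<forall>s\<in>proj n S. sat n x s"
    "(\<forall>s\<in>proj n S. rat_con s) \<longrightarrow> (\<forall>j<n. x j \<in> \<rat>)" by auto
  from proj_complete[OF Suc.prems(1) x(1)] obtain v where
    v: "\<forall>s\<in>S. sat (Suc n) (x(n:=v)) s"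
       "(\<forall>j<n. x j \<in> \<rat>) \<and> (\<forall>s\<in>S. rat_con s) \<longrightarrow> v \<in> \<rat>" by blast
  show ?case
  proof (intro exI[of _ "x(n:=v)"] conjI impI allI)
    show "\<forall>s\<in>S. sat (Suc n) (x(n := v)) s" by fact
    fix j assume "\<forall>s\<in>S. rat_con s" "j < Suc n"
    then show "(x(n := v)) j \<in> \<rat>" using x(2) v(2) rat_proj[of S n] by (auto simp: less_Suc_eq)
  qed
qed

lemma icomb_self: "s \<in> S \<Longrightarrow> finite S \<Longrightarrow> s \<in> icomb S"
proof -
  assume a: "s \<in> S" "finite S"
  have h: "(if t = s then 1 else 0) * c = (if t = s then c else 0)" for t and c :: real by simp
  have "s = ((\<lambda>j. \<Sum>t\<in>S. (if t = s then 1 else 0) * fst t j), (\<Sum>t\<in>S. (if t = s then 1 else 0) * snd t))"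
    unfolding h using a by (simp add: sum.delta')
  then show ?thesis unfolding icomb_def by (intro CollectI exI[of _ "\<lambda>t. if t = s then 1 else 0"]) auto
qed

lemma icomb_add:
  assumes "a \<in> icomb S" "b \<in> icomb S" "0 \<le> \<alpha>" "0 \<le> \<beta>"
  shows "(\<lambda>j. \<alpha> * fst a j + \<beta> * fst b j, \<alpha> * snd a + \<beta> * snd b) \<in> icomb S"
proof -
  obtain la where la: "\<forall>s\<in>S. 0 \<le> la s" "a = ((\<lambda>j. \<Sum>s\<in>S. la s * fst s j), (\<Sum>s\<in>S. la s * snd s))"
    using assms(1) unfolding icomb_def by blast
  obtain lb where lb: "\<forall>s\<in>S. 0 \<le> lb s" "b = ((\<lambda>j. \<Sum>s\<in>S. lb s * fst s j), (\<Sum>s\<in>S. lb s * snd s))"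
    using assms(2) unfolding icomb_def by blast
  show ?thesis unfolding icomb_def
    apply (rule CollectI, rule exI[of _ "\<lambda>s. \<alpha> * la s + \<beta> * lb s"])
    using la lb assms(3,4)
    by (auto simp: sum_distrib_left sum.distrib algebra_simps)
qed

lemma icomb_zero: "((\<lambda>j. 0), 0) \<in> icomb S"
  unfolding icomb_def by (rule CollectI, rule exI[of _ "\<lambda>_. 0"]) auto

lemma icomb_sum:
  assumes "finite T" "T \<subseteq> icomb S" "\<forall>t\<in>T. 0 \<le> m t"
  shows "((\<lambda>j. \<Sum>t\<in>T. m t * fst t j), (\<Sum>t\<in>T. m t * snd t)) \<in> icomb S"
  using assms
proof (induction T rule: finite_induct)
  case empty
  then show ?case using icomb_zero by simp
next
  case (insert t T)
  then have "((\<lambda>j. \<Sum>t\<in>T. m t * fst t j), (\<Sum>t\<in>T. m t * snd t)) \<in> icomb S" by auto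
  from icomb_add[OF _ this, of t "m t" 1] insert.prems insert.hyps
  show ?case by auto
qed

lemma icomb_trans: "finite T \<Longrightarrow> T \<subseteq> icomb S \<Longrightarrow> icomb T \<subseteq> icomb S"
  unfolding icomb_def[of T] using icomb_sum by blast

lemma proj_icomb:
  assumes "finite S" shows "proj n S \<subseteq> icomb S"
proof
  fix r assume "r \<in> proj n S"
  then consider "r \<in> S" | s t where "s\<in>S" "t\<in>S" "fst s n > 0" "fst t n < 0" "r = comb n s t"
    unfolding proj_def by blast
  then show "r \<in> icomb S"
  proof cases
    case 1 then show ?thesis using icomb_self assms by blast
  next
    case 2
    from icomb_add[OF icomb_self[OF 2(1) assms] icomb_self[OF 2(2) assms], of "1 / fst s n" "- 1 / fst t n"]
    show ?thesis using 2 by (simp add: comb_def divide_simps)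
  qed
qed

lemma fm_icomb: "finite S \<Longrightarrow> fm n S \<subseteq> icomb S"
proof (induction n arbitrary: S)
  case 0 then show ?case using icomb_self by auto
next
  case (Suc n)
  have "fm n (proj n S) \<subseteq> icomb (proj n S)" using Suc finite_proj by blast
  also have "\<dots> \<subseteq> icomb S" by (rule icomb_trans[OF finite_proj[OF Suc.prems] proj_icomb[OF Suc.prems]])
  finally show ?case by simp
qed

lemma fm_zc: "\<forall>s\<in>S. \<forall>j\<ge>n. fst s j = 0 \<Longrightarrow> \<forall>s\<in>fm n S. \<forall>j. fst s j = 0"
proof (induction n arbitrary: S)
  case 0 then show ?case by auto
next
  case (Suc n)
  have "\<forall>s\<in>proj n S. \<forall>j\<ge>n. fst s j = 0"
  proof (intro ballI allI impI)
    fix s j assume s: "s \<in> proj n S" "n \<le> j"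
    from s(1) consider "s \<in> S" "fst s n = 0"
      | a b where "a \<in> S" "b \<in> S" "fst a n > 0" "fst b n < 0" "s = comb n a b"
      unfolding proj_def by blast
    then show "fst s j = 0"
    proof cases
      case 1 then show ?thesis using Suc.prems s(2) by (cases "j = n") auto
    next
      case 2 then show ?thesis using Suc.prems s(2) by (cases "j = n") (auto simp: comb_def)
    qed
  qed
  then show ?case using Suc.IH by simp
qed

lemma farkas_set:
  assumes fin: "finite S" and zc: "\<forall>s\<in>S. \<forall>j\<ge>n. fst s j = 0"
    and inf: "\<not> (\<exists>x. \<forall>s\<in>S. sat n x s)"
  shows "\<exists>l. (\<forall>s\<in>S. 0 \<le> l s) \<and> (\<forall>j. (\<Sum>s\<in>S. l s * fst s j) = 0) \<and> (\<Sum>s\<in>S. l s * snd s) < 0"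
proof -
  from fm_complete[OF fin, of n] inf obtain r where r: "r \<in> fm n S" "snd r < 0"
    by (meson not_le)
  from fm_icomb[OF fin] r obtain l where l: "\<forall>s\<in>S. 0 \<le> l s"
     "r = ((\<lambda>j. \<Sum>s\<in>S. l s * fst s j), (\<Sum>s\<in>S. l s * snd s))"
    unfolding icomb_def by blast
  have "\<forall>j. fst r j = 0" using fm_zc[OF zc] r by blast
  then show ?thesis using l r by (intro exI[of _ l]) auto
qed



lemma lhs_comb_sum:
  "(\<Sum>k\<in>K. l k * lhs n (fst (R k)) x) = (\<Sum>j<n. x j * (\<Sum>k\<in>K. l k * fst (R k) j))"
  unfolding lhs_def by (simp add: sum_distrib_left sum.swap[of _ K] algebra_simps)

lemma farkas_idx:
  assumes fin: "finite K" and zc: "\<forall>k\<in>K. \<forall>j\<ge>n. fst (R k) j = 0"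
    and inf: "\<not> (\<exists>x. \<forall>k\<in>K. sat n x (R k))"
  shows "\<exists>l. (\<forall>k\<in>K. 0 \<le> l k) \<and> (\<forall>j. (\<Sum>k\<in>K. l k * fst (R k) j) = 0) \<and> (\<Sum>k\<in>K. l k * snd (R k)) < 0"
proof -
  have "\<exists>l. (\<forall>s\<in>R ` K. 0 \<le> l s) \<and> (\<forall>j. (\<Sum>s\<in>R ` K. l s * fst s j) = 0) \<and> (\<Sum>s\<in>R ` K. l s * snd s) < 0"
    using inf zc fin by (intro farkas_set) auto
  then obtain l where l: "\<forall>s\<in>R ` K. 0 \<le> l s" "\<forall>j. (\<Sum>s\<in>R ` K. l s * fst s j) = 0" "(\<Sum>s\<in>R ` K. l s * snd s) < 0"
    by blast
  define fib where "fib s = {k\<in>K. R k = s}" for s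
  define l' where "l' k = l (R k) / real (card (fib (R k)))" for k
  have key: "(\<Sum>k\<in>K. l' k * F (R k)) = (\<Sum>s\<in>R ` K. l s * F s)" for F :: "con \<Rightarrow> real"
  proof -
    have "(\<Sum>k\<in>K. l' k * F (R k)) = (\<Sum>s\<in>R ` K. \<Sum>k\<in>fib s. l' k * F (R k))"
      unfolding fib_def using fin by (rule sum.image_gen)
    also have "\<dots> = (\<Sum>s\<in>R ` K. l s * F s)"
    proof (rule sum.cong[OF refl])
      fix s assume s: "s \<in> R ` K"
      have "card (fib s) > 0" using s fin by (auto simp: fib_def card_gt_0_iff)
      have "(\<Sum>k\<in>fib s. l' k * F (R k)) = (\<Sum>k\<in>fib s. l s / real (card (fib s)) * F s)"
        by (intro sum.cong) (auto simp: fib_def l'_def)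
      also have "\<dots> = l s * F s" using \<open>card (fib s) > 0\<close> by simp
      finally show "(\<Sum>k\<in>fib s. l' k * F (R k)) = l s * F s" .
    qed
    finally show ?thesis .
  qed
  show ?thesis
  proof (intro exI[of _ l'] conjI allI ballI)
    fix k assume "k \<in> K" then show "0 \<le> l' k" using l(1) by (auto simp: l'_def)
  next
    fix j show "(\<Sum>k\<in>K. l' k * fst (R k) j) = 0" using key[of "\<lambda>s. fst s j"] l(2) by simp
  next
    show "(\<Sum>k\<in>K. l' k * snd (R k)) < 0" using key[of snd] l(3) by simp
  qed
qed

lemma rational_sol:
  assumes fin: "finite S" and zc: "\<forall>s\<in>S. \<forall>j\<ge>n. fst s j = 0"
    and ex: "\<forall>s\<in>S. sat n x0 s" and rat: "\<forall>s\<in>S. rat_con s"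
  shows "\<exists>x. (\<forall>s\<in>S. sat n x s) \<and> (\<forall>j<n. x j \<in> \<rat>)"
proof -
  have "\<forall>r\<in>fm n S. 0 \<le> snd r"
  proof (rule ccontr)
    assume "\<not> ?thesis"
    then obtain r where r: "r \<in> fm n S" "snd r < 0" by (auto simp: not_le)
    from fm_icomb[OF fin] r obtain l where l: "\<forall>s\<in>S. 0 \<le> l s"
      "r = ((\<lambda>j. \<Sum>s\<in>S. l s * fst s j), (\<Sum>s\<in>S. l s * snd s))"
      unfolding icomb_def by blast
    have "\<forall>j. fst r j = 0" using fm_zc[OF zc] r(1) by blast
    then have z: "\<forall>j. (\<Sum>s\<in>S. l s * fst s j) = 0" using l(2) by simp
    have "0 \<le> (\<Sum>s\<in>S. l s * (snd s - lhs n (fst s) x0))"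
      using l(1) ex by (intro sum_nonneg) (auto simp: sat_def)
    also have "\<dots> = (\<Sum>s\<in>S. l s * snd s) - (\<Sum>s\<in>S. l s * lhs n (fst s) x0)"
      by (simp add: right_diff_distrib sum_subtractf)
    also have "(\<Sum>s\<in>S. l s * lhs n (fst s) x0) = 0"
      using lhs_comb_sum[where l=l and R=id and K=S and x=x0 and n=n] z by simp
    finally show False using r l(2) by simp
  qed
  from fm_complete[OF fin this] rat show ?thesis by blast
qed



definition le_pm :: "('n \<Rightarrow>\<^sub>0 nat) \<Rightarrow> ('n \<Rightarrow>\<^sub>0 nat) \<Rightarrow> bool" where
  "le_pm b c \<longleftrightarrow> (\<forall>i. Poly_Mapping.lookup b i \<le> Poly_Mapping.lookup c i)"

lemma ideal_gen_least: "is_ideal J \<Longrightarrow> S \<subseteq> J \<Longrightarrow> ideal_gen S \<subseteq> J"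
  unfolding ideal_gen_def by blast

lemma ideal_gen_sub: "S \<subseteq> ideal_gen S"
  unfolding ideal_gen_def by blast

lemma ideal_gen_mult: "x \<in> ideal_gen S \<Longrightarrow> a * x \<in> ideal_gen S"
  unfolding ideal_gen_def is_ideal_def by blast

lemma ideal_gen_zero: "0 \<in> ideal_gen S"
  unfolding ideal_gen_def is_ideal_def by blast

lemma ideal_pow_zero: "0 \<in> ideal_pow J i"
  by (cases i) (auto simp: ideal_gen_zero)

lemma ideal_pow_mult: "x \<in> ideal_pow J i \<Longrightarrow> a * x \<in> ideal_pow J i"
  by (cases i) (auto simp: ideal_gen_mult)

lemma ideal_pow_SucI: "x \<in> J \<Longrightarrow> y \<in> ideal_pow J n \<Longrightarrow> x * y \<in> ideal_pow J (Suc n)"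
  using ideal_gen_sub by fastforce

lemma monom_mult: "monom_x a * monom_x b = (monom_x (a + b) :: ('n \<Rightarrow>\<^sub>0 nat) \<Rightarrow>\<^sub>0 'k::comm_ring_1)"
  unfolding monom_x_def by (simp add: mult_single)

lemma monom_pow: "\<exists>b. (monom_x a :: ('n \<Rightarrow>\<^sub>0 nat) \<Rightarrow>\<^sub>0 'k::comm_ring_1) ^ n = monom_x b \<and> (\<forall>i. Poly_Mapping.lookup b i = n * Poly_Mapping.lookup a i)"
proof (induction n)
  case 0
  then show ?case by (intro exI[of _ 0]) (simp add: monom_x_def)
next
  case (Suc n)
  then obtain b where b: "monom_x a ^ n = (monom_x b :: ('n \<Rightarrow>\<^sub>0 nat) \<Rightarrow>\<^sub>0 'k)" "\<forall>i. Poly_Mapping.lookup b i = n * Poly_Mapping.lookup a i" by blast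
  show ?case
    by (intro exI[of _ "a + b"]) (simp add: b monom_mult lookup_add)
qed

lemma keys_monom: "Poly_Mapping.keys (monom_x a :: ('n \<Rightarrow>\<^sub>0 nat) \<Rightarrow>\<^sub>0 'k::{comm_ring_1}) = {a}"
  unfolding monom_x_def by simp

lemma le_pm_split: "le_pm s b \<Longrightarrow> b = s + (b - s)"
  unfolding le_pm_def by (intro poly_mapping_eqI) (simp add: lookup_add lookup_minus)

section \<open>Weights\<close>

definition wt :: "('n::finite \<Rightarrow> real) \<Rightarrow> ('n \<Rightarrow>\<^sub>0 nat) \<Rightarrow> real" where
  "wt w b = (\<Sum>i\<in>UNIV. w i * real (Poly_Mapping.lookup b i))"

lemma wt_add: "wt w (b + c) = wt w b + wt w c"
  unfolding wt_def by (simp add: lookup_add algebra_simps sum.distrib)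

lemma wt_nonneg: "\<forall>i. 0 \<le> w i \<Longrightarrow> 0 \<le> wt w b"
  unfolding wt_def by (intro sum_nonneg) auto

lemma wt_mono: "\<forall>i. 0 \<le> w i \<Longrightarrow> le_pm b c \<Longrightarrow> wt w b \<le> wt w c"
  unfolding wt_def le_pm_def by (intro sum_mono mult_left_mono) auto

lemma wt_scale: "(\<forall>i. Poly_Mapping.lookup b i = n * Poly_Mapping.lookup a i) \<Longrightarrow> wt w b = real n * wt w a"
  unfolding wt_def by (simp add: sum_distrib_left algebra_simps)

definition V :: "('n::finite \<Rightarrow> real) \<Rightarrow> real \<Rightarrow> (('n \<Rightarrow>\<^sub>0 nat) \<Rightarrow>\<^sub>0 'k::comm_ring_1) set" where
  "V w t = {f. \<forall>b\<in>Poly_Mapping.keys f. t \<le> wt w b}"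

lemma V_mult:
  fixes x y :: "('n::finite \<Rightarrow>\<^sub>0 nat) \<Rightarrow>\<^sub>0 'k::comm_ring_1"
  assumes "\<forall>i. 0 \<le> w i" "x \<in> V w s" "y \<in> V w t"
  shows "x * y \<in> V w (s + t)"
  unfolding V_def
proof (intro CollectI ballI)
  fix b assume "b \<in> Poly_Mapping.keys (x * y)"
  then obtain c d where "b = c + d" "c \<in> Poly_Mapping.keys x" "d \<in> Poly_Mapping.keys y" using keys_mult by blast
  then show "s + t \<le> wt w b" using assms by (auto simp: V_def wt_add intro: add_mono)
qed

lemma V_ideal:
  assumes "\<forall>i. 0 \<le> w i"
  shows "is_ideal (V w t :: (('n::finite \<Rightarrow>\<^sub>0 nat) \<Rightarrow>\<^sub>0 'k::comm_ring_1) set)"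
  unfolding is_ideal_def
proof (intro conjI ballI allI impI)
  show "0 \<in> V w t" by (simp add: V_def)
next
  fix x y :: "('n \<Rightarrow>\<^sub>0 nat) \<Rightarrow>\<^sub>0 'k" assume "x \<in> V w t" "y \<in> V w t"
  then show "x + y \<in> V w t" using keys_add[of x y] by (auto simp: V_def)
next
  fix a x :: "('n \<Rightarrow>\<^sub>0 nat) \<Rightarrow>\<^sub>0 'k" assume "x \<in> V w t"
  have "a \<in> V w 0" using wt_nonneg[OF assms] by (auto simp: V_def)
  from V_mult[OF assms this \<open>x \<in> V w t\<close>] show "a * x \<in> V w t" by simp
qed

lemma V_pow:
  assumes "\<forall>i. 0 \<le> w i" "J \<subseteq> V w t"
  shows "ideal_pow J i \<subseteq> V w (real i * t)"
proof (induction i)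
  case 0
  then show ?case using wt_nonneg[OF assms(1)] by (auto simp: V_def)
next
  case (Suc i)
  have "{x * y |x y. x \<in> J \<and> y \<in> ideal_pow J i} \<subseteq> V w (real (Suc i) * t)"
  proof clarify
    fix x y assume "x \<in> J" "y \<in> ideal_pow J i"
    then have "x * y \<in> V w (t + real i * t)" using V_mult[OF assms(1)] assms(2) Suc by blast
    then show "x * y \<in> V w (real (Suc i) * t)" by (simp add: algebra_simps)
  qed
  then show ?case by (simp add: ideal_gen_least V_ideal[OF assms(1)])
qed

section \<open>Monomial ideals\<close>

lemma monom_ideal_support:
  assumes "f \<in> ideal_gen (monom_x ` S :: (('n \<Rightarrow>\<^sub>0 nat) \<Rightarrow>\<^sub>0 'k::comm_ring_1) set)" "b \<in> Poly_Mapping.keys f"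
  shows "\<exists>s\<in>S. le_pm s b"
proof -
  define U :: "(('n \<Rightarrow>\<^sub>0 nat) \<Rightarrow>\<^sub>0 'k) set" where "U = {f. \<forall>b\<in>Poly_Mapping.keys f. \<exists>s\<in>S. le_pm s b}"
  have "is_ideal U"
    unfolding is_ideal_def
  proof (intro conjI ballI allI impI)
    show "0 \<in> U" by (simp add: U_def)
  next
    fix x y assume "x \<in> U" "y \<in> U"
    then show "x + y \<in> U" using keys_add[of x y] by (auto simp: U_def)
  next
    fix a x assume x: "x \<in> U"
    show "a * x \<in> U" unfolding U_def
    proof (intro CollectI ballI)
      fix b assume "b \<in> Poly_Mapping.keys (a * x)"
      then obtain c d where "b = c + d" "d \<in> Poly_Mapping.keys x" using keys_mult by blast
      with x obtain s where "s \<in> S" "le_pm s d" by (auto simp: U_def)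
      then show "\<exists>s\<in>S. le_pm s b" using \<open>b = c + d\<close> by (auto simp: le_pm_def lookup_add intro!: bexI[of _ s] trans_le_add2)
    qed
  qed
  moreover have "monom_x ` S \<subseteq> U"
    by (auto simp: U_def keys_monom le_pm_def)
  ultimately have "f \<in> U" using assms(1) ideal_gen_least by blast
  then show ?thesis using assms(2) by (auto simp: U_def)
qed

lemma monom_in_ideal:
  assumes "s \<in> S" "le_pm s b"
  shows "(monom_x b :: ('n \<Rightarrow>\<^sub>0 nat) \<Rightarrow>\<^sub>0 'k::comm_ring_1) \<in> ideal_gen (monom_x ` S)"
proof -
  have e: "b = (b - s) + s" using le_pm_split[OF assms(2)] by (metis add.commute)
  have "monom_x (b - s) * (monom_x s :: ('n \<Rightarrow>\<^sub>0 nat) \<Rightarrow>\<^sub>0 'k) = monom_x ((b - s) + s)" by (rule monom_mult)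
  then have eq: "monom_x b = monom_x (b - s) * (monom_x s :: ('n \<Rightarrow>\<^sub>0 nat) \<Rightarrow>\<^sub>0 'k)" using e by simp
  have "(monom_x s :: ('n \<Rightarrow>\<^sub>0 nat) \<Rightarrow>\<^sub>0 'k) \<in> ideal_gen (monom_x ` S)" using assms(1) ideal_gen_sub by blast
  from ideal_gen_mult[OF this, of "monom_x (b - s)"] show ?thesis unfolding eq .
qed


lemma exists_min_gen:
  fixes I :: "(('n::finite \<Rightarrow>\<^sub>0 nat) \<Rightarrow>\<^sub>0 'k::comm_ring_1) set"
  shows "monom_x b \<in> I \<Longrightarrow> \<exists>g\<in>min_gens I. le_pm g b"
proof (induction b rule: measure_induct_rule[where f="\<lambda>b. \<Sum>i\<in>UNIV. Poly_Mapping.lookup b i"])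
  case (less b)
  show ?case
  proof (cases "b \<in> min_gens I")
    case True
    then show ?thesis by (auto simp: le_pm_def)
  next
    case False
    then obtain b' where b': "monom_x b' \<in> I" "\<forall>i. Poly_Mapping.lookup b' i \<le> Poly_Mapping.lookup b i" "b' \<noteq> b"
      using less.prems unfolding min_gens_def by blast
    have "\<exists>i0. Poly_Mapping.lookup b' i0 \<noteq> Poly_Mapping.lookup b i0"
    proof (rule ccontr)
      assume "\<nexists>i0. Poly_Mapping.lookup b' i0 \<noteq> Poly_Mapping.lookup b i0"
      then have "b' = b" by (intro poly_mapping_eqI) auto
      with b'(3) show False ..
    qed
    then obtain i0 where "Poly_Mapping.lookup b' i0 \<noteq> Poly_Mapping.lookup b i0" by blast
    then have "Poly_Mapping.lookup b' i0 < Poly_Mapping.lookup b i0" using b'(2) le_neq_implies_less by blast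
    then have "(\<Sum>i\<in>UNIV. Poly_Mapping.lookup b' i) < (\<Sum>i\<in>UNIV. Poly_Mapping.lookup b i)"
      using b'(2) by (intro sum_strict_mono_ex1) auto
    from less.IH[OF this b'(1)] obtain g where "g \<in> min_gens I" "le_pm g b'" by blast
    then show ?thesis using b'(2) by (auto simp: le_pm_def intro: le_trans)
  qed
qed

lemma dickson:
  fixes A :: "('a \<Rightarrow> nat) set"
  shows "finite D \<Longrightarrow> (\<forall>x\<in>A. \<forall>i. i \<notin> D \<longrightarrow> x i = 0) \<Longrightarrow>
    (\<forall>x\<in>A. \<forall>y\<in>A. (\<forall>i. x i \<le> y i) \<longrightarrow> x = y) \<Longrightarrow> finite A"
proof (induction "card D" arbitrary: D A rule: less_induct)
  case less
  show ?case
  proof (cases "A = {}")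
    case True then show ?thesis by simp
  next
    case False
    then obtain x0 where x0: "x0 \<in> A" by blast
    define B where "B i v = {y\<in>A. y i = v}" for i v
    have cover: "A \<subseteq> insert x0 (\<Union>i\<in>D. \<Union>v\<in>{..<x0 i}. B i v)"
    proof
      fix y assume y: "y \<in> A"
      show "y \<in> insert x0 (\<Union>i\<in>D. \<Union>v\<in>{..<x0 i}. B i v)"
      proof (cases "y = x0")
        case False
        then have "\<not> (\<forall>i. x0 i \<le> y i)" using less.prems(3) x0 y by blast
        then obtain i where i: "y i < x0 i" by (auto simp: not_le)
        then have "i \<in> D" using less.prems(2) x0 by force
        then show ?thesis using i y by (auto simp: B_def)
      qed simp
    qed
    have finB: "finite (B i v)" if "i \<in> D" for i v
    proof -
      define f where "f y = y(i := 0)" for y :: "'a \<Rightarrow> nat"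
      have inj: "inj_on f (B i v)"
      proof (rule inj_onI)
        fix y y' assume yy: "y \<in> B i v" "y' \<in> B i v" "f y = f y'"
        show "y = y'"
        proof
          fix j show "y j = y' j"
            using fun_cong[OF yy(3), of j] yy(1,2) by (cases "j = i") (auto simp: f_def B_def)
        qed
      qed
      have "finite (f ` B i v)"
      proof (rule less.hyps[of "D - {i}"])
        show "card (D - {i}) < card D" using that less.prems(1) by (meson card_Diff1_less)
        show "finite (D - {i})" using less.prems(1) by simp
        show "\<forall>x\<in>f ` B i v. \<forall>j. j \<notin> D - {i} \<longrightarrow> x j = 0"
          using less.prems(2) by (auto simp: f_def B_def)
        show "\<forall>x\<in>f ` B i v. \<forall>y\<in>f ` B i v. (\<forall>j. x j \<le> y j) \<longrightarrow> x = y"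
        proof (clarify)
          fix y y' assume yy: "y \<in> B i v" "y' \<in> B i v" "\<forall>j. f y j \<le> f y' j"
          have "\<forall>j. y j \<le> y' j"
          proof
            fix j show "y j \<le> y' j"
              using yy(1,2) spec[OF yy(3), of j] by (cases "j = i") (auto simp: f_def B_def)
          qed
          then have "y = y'" using less.prems(3) yy by (auto simp: B_def)
          then show "f y = f y'" by simp
        qed
      qed
      then show ?thesis using finite_imageD inj by blast
    qed
    show ?thesis using cover finB less.prems(1) by (meson finite.insertI finite_UN_I finite_lessThan finite_subset)
  qed
qed

lemma finite_min_gens:
  fixes I :: "(('n::finite \<Rightarrow>\<^sub>0 nat) \<Rightarrow>\<^sub>0 'k::comm_ring_1) set"
  shows "finite (min_gens I)"
proof -
  have "finite (Poly_Mapping.lookup ` min_gens I)"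
    by (rule dickson[of UNIV]) (auto simp: min_gens_def)
  moreover have "inj_on Poly_Mapping.lookup (min_gens I)" by (auto intro: inj_onI)
  ultimately show ?thesis using finite_imageD by blast
qed



lemma val_dir:
  fixes I :: "(('n::finite \<Rightarrow>\<^sub>0 nat) \<Rightarrow>\<^sub>0 'k::field) set"
  assumes mi: "monomial_ideal I" and w: "\<forall>i. 0 \<le> w i" and wg: "\<forall>g\<in>min_gens I. 1 \<le> wt w g"
    and mem: "monom_x a \<in> rat_power I p q"
  shows "real p \<le> real q * wt w a"
proof (rule ccontr)
  assume "\<not> ?thesis" hence lt: "real q * wt w a < real p" by simp
  obtain S where S: "I = ideal_gen (monom_x ` S)" using mi monomial_ideal_def by blast
  have I1: "I \<subseteq> V w 1"
  proof
    fix f assume f: "f \<in> I"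
    show "f \<in> V w 1" unfolding V_def
    proof (intro CollectI ballI)
      fix b assume b: "b \<in> Poly_Mapping.keys f"
      obtain s where "s \<in> S" "le_pm s b" using monom_ideal_support f b S by blast
      then have "monom_x b \<in> I" using monom_in_ideal S by blast
      then obtain g where "g \<in> min_gens I" "le_pm g b" using exists_min_gen by blast
      then show "1 \<le> wt w b" using wg wt_mono[OF w] by (meson order_trans)
    qed
  qed
  have Ip: "ideal_pow I p \<subseteq> V w (real p)" using V_pow[OF w I1] by simp
  have Jp: "ideal_pow (ideal_pow I p) i \<subseteq> V w (real i * real p)" for i using V_pow[OF w Ip] .
  from mem obtain n c where n: "n \<ge> 1" "\<forall>i\<in>{1..n}. c i \<in> ideal_pow (ideal_pow I p) i"
    "(monom_x a ^ q) ^ n + (\<Sum>i=1..n. c i * (monom_x a ^ q) ^ (n - i)) = 0"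
    unfolding rat_power_def int_closure_def by blast
  obtain B where B: "monom_x a ^ (q * n) = (monom_x B :: ('n \<Rightarrow>\<^sub>0 nat) \<Rightarrow>\<^sub>0 'k)"
    "\<forall>i. Poly_Mapping.lookup B i = (q * n) * Poly_Mapping.lookup a i" using monom_pow by blast
  have z: "Poly_Mapping.lookup (c i * (monom_x a ^ q) ^ (n - i)) B = 0" if i: "i \<in> {1..n}" for i
  proof (rule ccontr)
    assume nz: "Poly_Mapping.lookup (c i * (monom_x a ^ q) ^ (n - i)) B \<noteq> 0"
    obtain Bi where Bi: "monom_x a ^ (q * (n - i)) = (monom_x Bi :: ('n \<Rightarrow>\<^sub>0 nat) \<Rightarrow>\<^sub>0 'k)"
      "\<forall>j. Poly_Mapping.lookup Bi j = (q * (n - i)) * Poly_Mapping.lookup a j" using monom_pow by blast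
    have "B \<in> Poly_Mapping.keys (c i * monom_x Bi)" using nz Bi(1) by (simp add: power_mult in_keys_iff)
    then obtain k l where kl: "B = k + l" "k \<in> Poly_Mapping.keys (c i)" "l \<in> Poly_Mapping.keys (monom_x Bi :: ('n \<Rightarrow>\<^sub>0 nat) \<Rightarrow>\<^sub>0 'k)"
      using keys_mult by blast
    hence "l = Bi" by (simp add: keys_monom)
    have "c i \<in> V w (real i * real p)" using Jp[of i] n(2) i by blast
    then have k1: "real i * real p \<le> wt w k" using kl(2) by (auto simp: V_def)
    have "wt w B = wt w k + wt w Bi" using kl(1) \<open>l = Bi\<close> wt_add by simp
    moreover have "wt w B = real (q * n) * wt w a" using wt_scale B(2) by blast
    moreover have "wt w Bi = real (q * (n - i)) * wt w a" using wt_scale Bi(2) by blast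
    ultimately have "wt w k = real q * real i * wt w a" using i by (simp add: of_nat_diff algebra_simps)
    with k1 have "real i * real p \<le> real i * (real q * wt w a)" by (simp add: algebra_simps)
    then have "real p \<le> real q * wt w a" using i by (simp add: mult_le_cancel_left_pos)
    with lt show False by simp
  qed
  have "Poly_Mapping.lookup ((monom_x a ^ q) ^ n + (\<Sum>i=1..n. c i * (monom_x a ^ q) ^ (n - i))) B = 1"
    using z B(1) by (simp add: lookup_add lookup_sum power_mult[symmetric] monom_x_def)
  with n(3) show False by simp
qed


lemma common_denom:
  fixes m :: nat and y :: "nat \<Rightarrow> real"
  shows "\<forall>k<m. y k \<in> \<rat> \<Longrightarrow> \<exists>D::nat. D > 0 \<and> (\<forall>k<m. real D * y k \<in> \<int>)"
proof (induction m)
  case 0 then show ?case by (intro exI[of _ 1]) auto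
next
  case (Suc m)
  then obtain D where D: "D > 0" "\<forall>k<m. real D * y k \<in> \<int>" by auto
  from Suc.prems have "y m \<in> \<rat>" by auto
  then obtain a b where ab: "b > 0" "y m = of_int a / of_int b" by (auto elim: Rats_cases')
  show ?case
  proof (intro exI[of _ "D * nat b"] conjI allI impI)
    show "0 < D * nat b" using D ab by simp
    fix k assume "k < Suc m"
    then consider "k < m" | "k = m" by linarith
    then show "real (D * nat b) * y k \<in> \<int>"
    proof cases
      case 1
      have e: "real (D * nat b) * y k = real (nat b) * (real D * y k)" by (simp only: of_nat_mult mult_ac)
      show ?thesis unfolding e by (rule Ints_mult[OF Ints_of_nat]) (use D 1 in auto)
    next
      case 2
      have e: "real (D * nat b) * y k = of_int (int D * a)" using ab 2 by simp
      show ?thesis unfolding e by (rule Ints_of_int)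
    qed
  qed
qed

lemma choose_sub:
  fixes m :: nat
  shows "K \<le> (\<Sum>k<m. n k) \<Longrightarrow> \<exists>n'. (\<forall>k. n' k \<le> (n k :: nat)) \<and> (\<Sum>k<m. n' k) = K"
proof (induction m arbitrary: K)
  case 0 then show ?case by (intro exI[of _ "\<lambda>_. 0"]) auto
next
  case (Suc m)
  show ?case
  proof (cases "K \<le> (\<Sum>k<m. n k)")
    case True
    then obtain n' where n': "\<forall>k. n' k \<le> n k" "(\<Sum>k<m. n' k) = K" using Suc.IH by blast
    have "(\<Sum>k<m. (n'(m := 0)) k) = (\<Sum>k<m. n' k)" by (intro sum.cong) auto
    then show ?thesis using n' by (intro exI[of _ "n'(m := 0)"]) auto
  next
    case False
    let ?s = "\<Sum>k<m. n k"
    have "(\<Sum>k<m. (n(m := K - ?s)) k) = ?s" by (intro sum.cong) auto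
    then show ?thesis using False Suc.prems by (intro exI[of _ "n(m := K - ?s)"]) auto
  qed
qed

lemma lookup_sum_list: "Poly_Mapping.lookup (sum_list xs) i = sum_list (map (\<lambda>x. Poly_Mapping.lookup x i) xs)"
  by (induction xs) (auto simp: lookup_add)

lemma list_props:
  fixes h :: "nat \<Rightarrow> 'n \<Rightarrow>\<^sub>0 nat" and n' :: "nat \<Rightarrow> nat"
  defines "Lm \<equiv> \<lambda>m. concat (map (\<lambda>k. replicate (n' k) (h k)) [0..<m])"
  shows "length (Lm m) = (\<Sum>k<m. n' k) \<and>
    (\<forall>i. Poly_Mapping.lookup (sum_list (Lm m)) i = (\<Sum>k<m. n' k * Poly_Mapping.lookup (h k) i)) \<and>
    set (Lm m) \<subseteq> h ` {..<m}"
proof (induction m)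
  case 0 then show ?case by (simp add: Lm_def)
next
  case (Suc m)
  have e: "Lm (Suc m) = Lm m @ replicate (n' m) (h m)" by (simp add: Lm_def)
  show ?case using Suc unfolding e
    by (auto simp: lookup_add lookup_sum_list sum_list_replicate map_replicate)
qed

lemma le_pm_sub:
  assumes "le_pm (x + y) b" shows "le_pm y (b - x)" "le_pm x b"
proof -
  have h: "Poly_Mapping.lookup x i + Poly_Mapping.lookup y i \<le> Poly_Mapping.lookup b i" for i
    using assms by (simp add: le_pm_def lookup_add)
  show "le_pm y (b - x)" unfolding le_pm_def lookup_minus using h by (metis add.commute le_diff_conv2 le_add2 le_trans)
  show "le_pm x b" unfolding le_pm_def using h by (metis add_leD1)
qed

lemma list_in_pow:
  fixes I :: "(('n::finite \<Rightarrow>\<^sub>0 nat) \<Rightarrow>\<^sub>0 'k::comm_ring_1) set"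
  shows "\<forall>g\<in>set L. monom_x g \<in> I \<Longrightarrow> le_pm (sum_list L) b \<Longrightarrow> monom_x b \<in> ideal_pow I (length L)"
proof (induction L arbitrary: b)
  case Nil then show ?case by simp
next
  case (Cons g L)
  have "le_pm g b" "le_pm (sum_list L) (b - g)" using le_pm_sub Cons.prems(2) by auto
  then have "monom_x (b - g) \<in> ideal_pow I (length L)" using Cons by auto
  moreover have "monom_x b = monom_x g * (monom_x (b - g) :: ('n \<Rightarrow>\<^sub>0 nat) \<Rightarrow>\<^sub>0 'k)"
    using le_pm_split[OF \<open>le_pm g b\<close>] by (simp add: monom_mult)
  ultimately show ?case using Cons.prems(1) ideal_pow_SucI by fastforce
qed

lemma block_in_pow:
  fixes I :: "(('n::finite \<Rightarrow>\<^sub>0 nat) \<Rightarrow>\<^sub>0 'k::comm_ring_1) set"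
  shows "length L = p * D \<Longrightarrow> \<forall>g\<in>set L. monom_x g \<in> I \<Longrightarrow> le_pm (sum_list L) b \<Longrightarrow>
    monom_x b \<in> ideal_pow (ideal_pow I p) D"
proof (induction D arbitrary: L b)
  case 0 then show ?case by simp
next
  case (Suc D)
  define L1 where "L1 = take p L"
  define L2 where "L2 = drop p L"
  have len: "length L1 = p" "length L2 = p * D" using Suc.prems(1) by (auto simp: L1_def L2_def)
  have sL: "sum_list L = sum_list L1 + sum_list L2" unfolding L1_def L2_def
    by (metis append_take_drop_id sum_list_append)
  have m1: "monom_x (sum_list L1) \<in> ideal_pow I p"
    using list_in_pow[of L1 I "sum_list L1"] Suc.prems(2) len(1)
    by (auto simp: le_pm_def L1_def dest: in_set_takeD)
  have le1: "le_pm (sum_list L1) b" and "le_pm (sum_list L2) (b - sum_list L1)"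
    using le_pm_sub Suc.prems(3) sL by auto
  then have m2: "monom_x (b - sum_list L1) \<in> ideal_pow (ideal_pow I p) D"
    using Suc.IH[OF len(2)] Suc.prems(2) by (auto simp: L2_def dest: in_set_dropD)
  have "monom_x b = monom_x (sum_list L1) * (monom_x (b - sum_list L1) :: ('n \<Rightarrow>\<^sub>0 nat) \<Rightarrow>\<^sub>0 'k)"
    using le_pm_split[OF le1] by (simp add: monom_mult)
  then show ?case using m1 m2 ideal_pow_SucI by fastforce
qed



lemma constr:
  fixes I :: "(('n::finite \<Rightarrow>\<^sub>0 nat) \<Rightarrow>\<^sub>0 'k::field) set"
    and m :: nat and h :: "nat \<Rightarrow> 'n \<Rightarrow>\<^sub>0 nat" and y :: "nat \<Rightarrow> real"
  assumes hG: "\<forall>k<m. monom_x (h k) \<in> I" and y0: "\<forall>k<m. 0 \<le> y k" and yr: "\<forall>k<m. y k \<in> \<rat>"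
    and ya: "\<forall>i. (\<Sum>k<m. real (Poly_Mapping.lookup (h k) i) * y k) \<le> real (Poly_Mapping.lookup a i)"
    and ys: "real p / real q \<le> (\<Sum>k<m. y k)" and q: "q \<noteq> 0"
  shows "monom_x a \<in> rat_power I p q"
proof -
  obtain D :: nat where D: "D > 0" "\<forall>k<m. real D * y k \<in> \<int>" using common_denom[OF yr] by blast
  define n where "n k = nat \<lfloor>real D * real q * y k\<rfloor>" for k
  have rn: "real (n k) = real D * real q * y k" if "k < m" for k
  proof -
    have "real D * y k \<in> \<int>" using D(2) that by blast
    then obtain z where z: "real D * y k = of_int z" by (rule Ints_cases)
    have "0 \<le> real D * y k" using y0 that by simp
    then have "z \<ge> 0" using z by simp
    have e: "real D * real q * y k = of_int (int q * z)" using z by (simp add: algebra_simps)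
    have "int q * z \<ge> 0" using \<open>z \<ge> 0\<close> by simp
    then show ?thesis unfolding n_def e floor_of_int by (rule of_nat_nat)
  qed
  have "real (D * p) \<le> real (\<Sum>k<m. n k)"
  proof -
    have "real (\<Sum>k<m. n k) = real D * real q * (\<Sum>k<m. y k)"
      by (simp add: rn sum_distrib_left)
    moreover have "real D * real q * (real p / real q) = real (D * p)" using q by simp
    moreover have "real D * real q * (real p / real q) \<le> real D * real q * (\<Sum>k<m. y k)"
      using ys by (intro mult_left_mono) auto
    ultimately show ?thesis by linarith
  qed
  then have "p * D \<le> (\<Sum>k<m. n k)" by (simp only: of_nat_le_iff mult.commute)
  then obtain n' where n': "\<forall>k. n' k \<le> n k" "(\<Sum>k<m. n' k) = p * D" using choose_sub by blast
  have ni: "(\<Sum>k<m. n k * Poly_Mapping.lookup (h k) i) \<le> (q * D) * Poly_Mapping.lookup a i" for i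
  proof -
    have "real (\<Sum>k<m. n k * Poly_Mapping.lookup (h k) i) = real D * real q * (\<Sum>k<m. real (Poly_Mapping.lookup (h k) i) * y k)"
      by (simp add: rn sum_distrib_left algebra_simps)
    also have "\<dots> \<le> real D * real q * real (Poly_Mapping.lookup a i)"
      using ya by (intro mult_left_mono) auto
    also have "\<dots> = real ((q * D) * Poly_Mapping.lookup a i)" by simp
    finally show ?thesis by (simp only: of_nat_le_iff)
  qed
  define L where "L = concat (map (\<lambda>k. replicate (n' k) (h k)) [0..<m])"
  from list_props[of n' h m] have LP: "length L = (\<Sum>k<m. n' k)"
    "\<forall>i. Poly_Mapping.lookup (sum_list L) i = (\<Sum>k<m. n' k * Poly_Mapping.lookup (h k) i)"
    "set L \<subseteq> h ` {..<m}" unfolding L_def by auto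
  obtain B where B: "monom_x a ^ (q * D) = (monom_x B :: ('n \<Rightarrow>\<^sub>0 nat) \<Rightarrow>\<^sub>0 'k)"
    "\<forall>i. Poly_Mapping.lookup B i = (q * D) * Poly_Mapping.lookup a i" using monom_pow by blast
  have "le_pm (sum_list L) B"
    unfolding le_pm_def
  proof
    fix i
    have "(\<Sum>k<m. n' k * Poly_Mapping.lookup (h k) i) \<le> (\<Sum>k<m. n k * Poly_Mapping.lookup (h k) i)"
      using n'(1) by (intro sum_mono mult_right_mono) auto
    then show "Poly_Mapping.lookup (sum_list L) i \<le> Poly_Mapping.lookup B i" using LP(2) B(2) ni[of i] by simp
  qed
  moreover have "\<forall>g\<in>set L. monom_x g \<in> I" using LP(3) hG by auto
  ultimately have mB: "monom_x B \<in> ideal_pow (ideal_pow I p) D"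
    using block_in_pow[of L p D I B] LP(1) n'(2) by simp
  define c where "c i = (if i = D then - monom_x B else (0 :: ('n \<Rightarrow>\<^sub>0 nat) \<Rightarrow>\<^sub>0 'k))" for i
  have c: "\<forall>i\<in>{1..D}. c i \<in> ideal_pow (ideal_pow I p) i"
    using mB ideal_pow_mult[of "monom_x B" _ D "- 1"] by (auto simp: c_def ideal_pow_zero)
  have "(\<Sum>i=1..D. c i * (monom_x a ^ q) ^ (D - i)) = (\<Sum>i=1..D. (if i = D then - monom_x B else 0))"
    by (intro sum.cong) (auto simp: c_def)
  also have "\<dots> = - monom_x B" using D(1) by (simp add: sum.delta')
  finally have "(monom_x a ^ q) ^ D + (\<Sum>i=1..D. c i * (monom_x a ^ q) ^ (D - i)) = 0"
    using B(1) by (simp add: power_mult)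
  then have "monom_x a ^ q \<in> int_closure (ideal_pow I p)"
    unfolding int_closure_def using D(1) c by (intro CollectI exI[of _ D] conjI exI[of _ c]) auto
  then show ?thesis unfolding rat_power_def by simp
qed



lemma sum_delta_neg: "(j::nat) < m \<Longrightarrow> (\<Sum>k<m. c k * (if k = j then -1 else 0)) = - (c j :: real)"
proof -
  assume "j < m"
  have "(\<Sum>k<m. c k * (if k = j then -1 else 0)) = (\<Sum>k<m. if k = j then - c k else 0)"
    by (intro sum.cong) auto
  also have "\<dots> = - c j" using \<open>j < m\<close> by simp
  finally show ?thesis .
qed

lemma sum_delta_neg2: "(j::nat) < m \<Longrightarrow> (\<Sum>k<m. (if j = k then -1 else 0) * c k) = - (c j :: real)"
proof -
  assume "j < m"
  have "(\<Sum>k<m. (if j = k then -1 else 0) * c k) = (\<Sum>k<m. if j = k then - c k else 0)"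
    by (intro sum.cong) auto
  also have "\<dots> = - c j" using \<open>j < m\<close> by simp
  finally show ?thesis .
qed

theorem lemma2p1:
  fixes I :: "(('n::finite \<Rightarrow>\<^sub>0 nat) \<Rightarrow>\<^sub>0 'k::field) set"
    and a :: "'n \<Rightarrow>\<^sub>0 nat" and p q :: nat
  assumes "is_ideal I" and "monomial_ideal I" and "q \<noteq> 0"
  shows "monom_x a \<in> rat_power I p q \<longleftrightarrow> nu_star a I \<ge> ereal (real p / real q)"
proof -
  note mi = assms(2) and qnz = assms(3)
  define G where "G = min_gens I"
  have finG: "finite G" using finite_min_gens G_def by simp
  define m where "m = card G"
  obtain h where h: "bij_betw h {..<m} G"
    using ex_bij_betw_nat_finite[OF finG] by (auto simp: m_def atLeast0LessThan)
  have hG: "\<forall>k<m. h k \<in> G" using h bij_betwE by blast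
  have hsurj: "\<exists>k<m. g = h k" if "g \<in> G" for g
    using h that by (metis bij_betw_imp_surj_on imageE lessThan_iff)
  define u where "u = real p / real q"
  define A where "A i = real (Poly_Mapping.lookup a i)" for i
  define R :: "(nat + 'n) option \<Rightarrow> con" where
    "R k = (case k of Some (Inl j) \<Rightarrow> ((\<lambda>k'. if j = k' then -1 else 0), 0)
             | Some (Inr i) \<Rightarrow> ((\<lambda>k'. if k' < m then real (Poly_Mapping.lookup (h k') i) else 0), A i)
             | None \<Rightarrow> ((\<lambda>k'. if k' < m then -1 else 0), - u))" for k
  define K :: "(nat + 'n) option set" where "K = insert None (Some ` (Inl ` {..<m} \<union> Inr ` UNIV))"
  have finK: "finite K" unfolding K_def by (intro finite.insertI finite_imageI finite_UnI) simp_all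
  have sumK: "(\<Sum>k\<in>K. F k) = (\<Sum>j<m. F (Some (Inl j))) + (\<Sum>i\<in>UNIV. F (Some (Inr i))) + F None"
    for F :: "(nat + 'n) option \<Rightarrow> real"
  proof -
    have "(\<Sum>k\<in>K. F k) = F None + (\<Sum>k\<in>Some ` (Inl ` {..<m} \<union> Inr ` UNIV). F k)"
      unfolding K_def by (subst sum.insert) auto
    also have "(\<Sum>k\<in>Some ` (Inl ` {..<m} \<union> Inr ` UNIV). F k) = (\<Sum>k\<in>Inl ` {..<m} \<union> Inr ` UNIV. F (Some k))"
      by (subst sum.reindex) auto
    also have "\<dots> = (\<Sum>k\<in>Inl ` {..<m}. F (Some k)) + (\<Sum>k\<in>Inr ` UNIV. F (Some k))"
      by (subst sum.union_disjoint) auto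
    also have "\<dots> = (\<Sum>j<m. F (Some (Inl j))) + (\<Sum>i\<in>UNIV. F (Some (Inr i)))"
      by (simp add: sum.reindex)
    finally show ?thesis by simp
  qed
  have zc: "\<forall>k\<in>K. \<forall>j\<ge>m. fst (R k) j = 0" by (auto simp: K_def R_def)
  have rat: "\<forall>k\<in>K. rat_con (R k)"
    by (auto simp: K_def R_def rat_con_def u_def A_def intro: Rats_divide)
  have fstL: "fst (R (Some (Inl j'))) j = (if j' = j then -1 else 0)" for j j' by (simp add: R_def)
  have fstR: "j < m \<Longrightarrow> fst (R (Some (Inr i))) j = real (Poly_Mapping.lookup (h j) i)" for j i by (simp add: R_def)
  have fstN: "j < m \<Longrightarrow> fst (R None) j = -1" for j by (simp add: R_def)
  have sndL: "snd (R (Some (Inl j))) = 0" for j by (simp add: R_def)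
  have sndR: "snd (R (Some (Inr i))) = A i" for i by (simp add: R_def)
  have sndN: "snd (R None) = - u" by (simp add: R_def)
  have lhsL: "j < m \<Longrightarrow> lhs m (fst (R (Some (Inl j)))) x = - x j" for j x
    unfolding lhs_def fstL by (rule sum_delta_neg2)
  have lhsR: "lhs m (fst (R (Some (Inr i)))) x = (\<Sum>k<m. real (Poly_Mapping.lookup (h k) i) * x k)" for i x
    unfolding lhs_def by (intro sum.cong) (auto simp: fstR)
  have lhsN: "lhs m (fst (R None)) x = - (\<Sum>k<m. x k)" for x
    unfolding lhs_def by (simp add: fstN sum_negf)
  have feas: "(\<forall>k\<in>K. sat m x (R k)) \<longleftrightarrow> (\<forall>j<m. 0 \<le> x j) \<and>
      (\<forall>i. (\<Sum>k<m. real (Poly_Mapping.lookup (h k) i) * x k) \<le> A i) \<and> u \<le> (\<Sum>k<m. x k)" for x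
  proof -
    have ballK: "(\<forall>k\<in>K. P k) \<longleftrightarrow> (\<forall>j<m. P (Some (Inl j))) \<and> (\<forall>i. P (Some (Inr i))) \<and> P None" for P
      by (auto simp: K_def)
    show ?thesis unfolding ballK sat_def using lhsL by (auto simp: lhsR lhsN sndL sndR sndN)
  qed
  have toY: "ereal u \<le> nu_star a I" if xf: "\<forall>k\<in>K. sat m x (R k)" for x
  proof -
    define y where "y g = x (inv_into {..<m} h g)" for g
    have yh: "y (h k) = x k" if "k < m" for k
      unfolding y_def using bij_betw_inv_into_left[OF h] that by simp
    have s1: "(\<Sum>g\<in>G. y g) = (\<Sum>k<m. x k)"
      using sum.reindex_bij_betw[OF h, of y] yh by simp
    have s2: "(\<Sum>g\<in>G. real (Poly_Mapping.lookup g i) * y g) = (\<Sum>k<m. real (Poly_Mapping.lookup (h k) i) * x k)" for i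
      using sum.reindex_bij_betw[OF h, of "\<lambda>g. real (Poly_Mapping.lookup g i) * y g"] yh by simp
    have fx: "(\<forall>j<m. 0 \<le> x j) \<and> (\<forall>i. (\<Sum>k<m. real (Poly_Mapping.lookup (h k) i) * x k) \<le> A i) \<and> u \<le> (\<Sum>k<m. x k)"
      using xf feas by blast
    have yY: "(\<forall>g\<in>G. y g \<ge> 0) \<and> (\<forall>i. (\<Sum>g\<in>G. real (Poly_Mapping.lookup g i) * y g) \<le> real (Poly_Mapping.lookup a i))"
    proof (intro conjI ballI allI)
      fix g assume "g \<in> G"
      then obtain k where "k < m" "g = h k" using hsurj by blast
      then show "0 \<le> y g" using fx yh by simp
    next
      fix i show "(\<Sum>g\<in>G. real (Poly_Mapping.lookup g i) * y g) \<le> real (Poly_Mapping.lookup a i)"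
        using fx s2 by (simp add: A_def)
    qed
    have "ereal (\<Sum>g\<in>G. y g) \<le> nu_star a I"
      unfolding nu_star_def G_def[symmetric] using yY by (intro SUP_upper) auto
    then show ?thesis using fx s1 by (metis ereal_less_eq(3) order_trans)
  qed
  have fromY: "(\<forall>j<m. 0 \<le> y (h j)) \<and>
      (\<forall>i. (\<Sum>k<m. real (Poly_Mapping.lookup (h k) i) * y (h k)) \<le> A i) \<and> (\<Sum>k<m. y (h k)) = (\<Sum>g\<in>G. y g)"
    if yY: "(\<forall>g\<in>G. y g \<ge> 0) \<and> (\<forall>i. (\<Sum>g\<in>G. real (Poly_Mapping.lookup g i) * y g) \<le> real (Poly_Mapping.lookup a i))"
    for y :: "('n \<Rightarrow>\<^sub>0 nat) \<Rightarrow> real"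
  proof (intro conjI allI impI)
    fix j assume "j < m" then show "0 \<le> y (h j)" using yY hG by blast
  next
    fix i
    have "(\<Sum>k<m. real (Poly_Mapping.lookup (h k) i) * y (h k)) = (\<Sum>g\<in>G. real (Poly_Mapping.lookup g i) * y g)"
      using sum.reindex_bij_betw[OF h, of "\<lambda>g. real (Poly_Mapping.lookup g i) * y g"] by simp
    then show "(\<Sum>k<m. real (Poly_Mapping.lookup (h k) i) * y (h k)) \<le> A i" using yY by (simp add: A_def)
  next
    show "(\<Sum>k<m. y (h k)) = (\<Sum>g\<in>G. y g)" using sum.reindex_bij_betw[OF h, of y] by simp
  qed
  have hI: "\<forall>k<m. monom_x (h k) \<in> I" using hG by (auto simp: G_def min_gens_def)
  show ?thesis
  proof
    assume mem: "monom_x a \<in> rat_power I p q"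
    show "ereal (real p / real q) \<le> nu_star a I"
    proof (rule ccontr)
      assume nge: "\<not> ereal (real p / real q) \<le> nu_star a I"
      have nofeas: "\<not> (\<exists>x. \<forall>k\<in>K. sat m x (R k))" using toY nge by (auto simp: u_def)
      obtain l where l: "\<forall>k\<in>K. 0 \<le> l k" "\<forall>j. (\<Sum>k\<in>K. l k * fst (R k) j) = 0"
        "(\<Sum>k\<in>K. l k * snd (R k)) < 0" using farkas_idx[OF finK zc nofeas] by blast
      define z where "z i = l (Some (Inr i))" for i
      define L0 where "L0 = l None"
      have z0: "0 \<le> z i" for i using l(1) by (auto simp: z_def K_def)
      have L00: "0 \<le> L0" using l(1) by (auto simp: L0_def K_def)
      have mu0: "0 \<le> l (Some (Inl j))" if "j < m" for j using l(1) that by (auto simp: K_def)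
      have coef: "(\<Sum>i\<in>UNIV. z i * real (Poly_Mapping.lookup (h j) i)) = L0 + l (Some (Inl j))" if j: "j < m" for j
      proof -
        have "0 = (\<Sum>k\<in>K. l k * fst (R k) j)" using l(2) by simp
        also have "\<dots> = - l (Some (Inl j)) + (\<Sum>i\<in>UNIV. z i * real (Poly_Mapping.lookup (h j) i)) - L0"
          unfolding sumK using j by (simp add: fstL fstR fstN sum_delta_neg z_def L0_def)
        finally show ?thesis by simp
      qed
      have rhs: "(\<Sum>i\<in>UNIV. z i * A i) - L0 * u < 0"
        using l(3) unfolding sumK by (simp add: sndL sndR sndN z_def L0_def)
      have "L0 \<noteq> 0"
      proof
        assume "L0 = 0"
        then have "(\<Sum>i\<in>UNIV. z i * A i) < 0" using rhs by simp
        moreover have "0 \<le> (\<Sum>i\<in>UNIV. z i * A i)" using z0 by (intro sum_nonneg) (simp add: A_def)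
        ultimately show False by simp
      qed
      with L00 have Lpos: "0 < L0" by simp
      define w where "w i = z i / L0" for i
      have w0: "\<forall>i. 0 \<le> w i" using z0 Lpos by (simp add: w_def)
      have wg: "\<forall>g\<in>min_gens I. 1 \<le> wt w g"
      proof
        fix g assume "g \<in> min_gens I"
        then obtain j where j: "j < m" "g = h j" using hsurj G_def by blast
        have "wt w g = (\<Sum>i\<in>UNIV. z i * real (Poly_Mapping.lookup (h j) i)) / L0"
          unfolding wt_def w_def j(2) by (simp add: sum_divide_distrib)
        also have "\<dots> = (L0 + l (Some (Inl j))) / L0" using coef j by simp
        also have "\<dots> \<ge> 1" using Lpos mu0[OF j(1)] by simp
        finally show "1 \<le> wt w g" .
      qed
      have "real p \<le> real q * wt w a" using val_dir[OF mi w0 wg mem] .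
      moreover have "wt w a = (\<Sum>i\<in>UNIV. z i * A i) / L0"
        unfolding wt_def w_def A_def by (simp add: sum_divide_distrib)
      moreover have "(\<Sum>i\<in>UNIV. z i * A i) / L0 < u" using rhs Lpos by (simp add: divide_less_eq mult.commute)
      ultimately have "real p < real q * u" using qnz
        by (smt (verit) mult_le_cancel_left_pos of_nat_0_less_iff gr0I)
      then show False using qnz by (simp add: u_def)
    qed
  next
    assume ge: "ereal (real p / real q) \<le> nu_star a I"
    have ex: "\<exists>x. \<forall>k\<in>K. sat m x (R k)"
    proof (rule ccontr)
      assume nofeas: "\<not> (\<exists>x. \<forall>k\<in>K. sat m x (R k))"
      obtain l where l: "\<forall>k\<in>K. 0 \<le> l k" "\<forall>j. (\<Sum>k\<in>K. l k * fst (R k) j) = 0"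
        "(\<Sum>k\<in>K. l k * snd (R k)) < 0" using farkas_idx[OF finK zc nofeas] by blast
      define Dn where "Dn = (\<Sum>k\<in>K. l k * snd (R k))"
      define L0 where "L0 = l None"
      have L00: "0 \<le> L0" using l(1) by (auto simp: L0_def K_def)
      define eps where "eps = - Dn / (2 * (L0 + 1))"
      have epos: "0 < eps" unfolding eps_def by (rule divide_pos_pos) (use l(3) L00 in \<open>auto simp: Dn_def\<close>)
      have "ereal (u - eps) < ereal u" using epos by simp
      also have "ereal u \<le> nu_star a I" using ge by (simp add: u_def)
      finally have "ereal (u - eps) < nu_star a I" .
      then obtain y where yY: "(\<forall>g\<in>G. y g \<ge> 0) \<and> (\<forall>i. (\<Sum>g\<in>G. real (Poly_Mapping.lookup g i) * y g) \<le> real (Poly_Mapping.lookup a i))"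
        and ylt: "u - eps < (\<Sum>g\<in>G. y g)"
        unfolding nu_star_def G_def[symmetric] less_SUP_iff by auto
      define x where "x k = y (h k)" for k
      have fx: "\<forall>j<m. 0 \<le> x j" "\<forall>i. (\<Sum>k<m. real (Poly_Mapping.lookup (h k) i) * x k) \<le> A i"
        "u - eps < (\<Sum>k<m. x k)"
        using fromY[OF yY] ylt by (auto simp: x_def)
      have "(\<Sum>k\<in>K. l k * (snd (R k) - lhs m (fst (R k)) x)) = Dn - (\<Sum>k\<in>K. l k * lhs m (fst (R k)) x)"
        by (simp add: right_diff_distrib sum_subtractf Dn_def)
      also have "(\<Sum>k\<in>K. l k * lhs m (fst (R k)) x) = 0"
        unfolding lhs_comb_sum using l(2) by simp
      finally have e1: "(\<Sum>k\<in>K. l k * (snd (R k) - lhs m (fst (R k)) x)) = Dn" by simp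
      have "(\<Sum>k\<in>K. l k * (snd (R k) - lhs m (fst (R k)) x)) \<ge> L0 * ((\<Sum>k<m. x k) - u)"
      proof -
        have "0 \<le> (\<Sum>j<m. l (Some (Inl j)) * (snd (R (Some (Inl j))) - lhs m (fst (R (Some (Inl j)))) x))"
          using l(1) fx(1) by (intro sum_nonneg) (auto simp: K_def sndL lhsL)
        moreover have "0 \<le> (\<Sum>i\<in>UNIV. l (Some (Inr i)) * (snd (R (Some (Inr i))) - lhs m (fst (R (Some (Inr i)))) x))"
          using l(1) fx(2) by (intro sum_nonneg mult_nonneg_nonneg) (auto simp: K_def sndR lhsR)
        ultimately show ?thesis unfolding sumK by (simp add: sndN lhsN L0_def)
      qed
      then have "Dn \<ge> L0 * ((\<Sum>k<m. x k) - u)" using e1 by simp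
      moreover have "L0 * ((\<Sum>k<m. x k) - u) \<ge> L0 * (- eps)" using fx(3) L00 by (intro mult_left_mono) auto
      moreover have "L0 * eps < - Dn"
      proof -
        have "L0 * eps = - Dn * (L0 / (2 * (L0 + 1)))" by (simp add: eps_def)
        also have "\<dots> < - Dn * 1"
          using l(3) L00 by (intro mult_strict_left_mono) (auto simp: Dn_def)
        finally show ?thesis by simp
      qed
      ultimately show False by simp
    qed
    then obtain x0 where x0: "\<forall>k\<in>K. sat m x0 (R k)" by blast
    have "\<exists>x. (\<forall>s\<in>R ` K. sat m x s) \<and> (\<forall>j<m. x j \<in> \<rat>)"
      using finK zc x0 rat by (intro rational_sol[of "R ` K" m x0]) auto
    then obtain x where x: "\<forall>k\<in>K. sat m x (R k)" "\<forall>j<m. x j \<in> \<rat>" by auto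
    from x(1) have fx: "(\<forall>j<m. 0 \<le> x j) \<and>
      (\<forall>i. (\<Sum>k<m. real (Poly_Mapping.lookup (h k) i) * x k) \<le> A i) \<and> u \<le> (\<Sum>k<m. x k)"
      using feas by blast
    show "monom_x a \<in> rat_power I p q"
      by (rule constr[OF hI _ x(2) _ _ qnz]) (use fx in \<open>auto simp: A_def u_def\<close>)
  qed
qed


end
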